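(* Let $R$ be an associative ring with identity and involution $*$, and let $a\in R^{\#}\cap R^{\dagger}$. Let $\chi_a=\{a,\ a^{\#},\ a^{\dagger},\ a^*,\ (a^{\dagger})^*,\ (a^{\#})^*\}$. Then $a\in R^{SEP}$ if and only if $aa^*a^{\dagger}xx^{\dagger}a\in PE(R)$ for some $x\in\chi_a$.
   Context: An involution on $R$ is a map $x\mapsto x^*$ with $(x^* )^*=x$, $(x+y)^*=x^*+y^*$, $(xy)^*=y^*x^*$. An element $a$ is Moore–Penrose invertible if there is $b$ with $aba=a$, $bab=b$, $(ab)^*=ab$, $(ba)^*=ba$; such $b$ is unique, denoted $a^{\dagger}$, and $R^{\dagger}$ is the set of such $a$ (all elements of $\chi_a$ are Moore–Penrose invertible when $a\in R^{\#}\cap R^{\dagger}$). An element $a$ is group invertible if there is $b$ with $aba=a$, $bab=b$, $ab=ba$; such $b$ is unique, denoted $a^{\#}$, and $R^{\#}$ is the set of such $a$. $PE(R)=\{e\in R: e^2=e=e^*\}$ is the set of projections. For $a\in R^{\#}\cap R^{\dagger}$, $a$ is SEP if $a^*=a^{\dagger}=a^{\#}$; $R^{SEP}$ denotes the set of SEP elements. *)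

theory Defs
  imports Main
begin

definition involution :: "('a::ring_1 \<Rightarrow> 'a) \<Rightarrow> bool" where
  "involution st \<longleftrightarrow> (\<forall>x. st (st x) = x) \<and> (\<forall>x y. st (x + y) = st x + st y)
      \<and> (\<forall>x y. st (x * y) = st y * st x)"

definition is_MP_inverse :: "('a::ring_1 \<Rightarrow> 'a) \<Rightarrow> 'a \<Rightarrow> 'a \<Rightarrow> bool" where
  "is_MP_inverse st a b \<longleftrightarrow> a * b * a = a \<and> b * a * b = b \<and> st (a * b) = a * b \<and> st (b * a) = b * a"

definition MP_invertible :: "('a::ring_1 \<Rightarrow> 'a) \<Rightarrow> 'a \<Rightarrow> bool" where
  "MP_invertible st a \<longleftrightarrow> (\<exists>b. is_MP_inverse st a b)"

definition MP_inv :: "('a::ring_1 \<Rightarrow> 'a) \<Rightarrow> 'a \<Rightarrow> 'a" where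
  "MP_inv st a = (THE b. is_MP_inverse st a b)"

definition is_group_inverse :: "'a::ring_1 \<Rightarrow> 'a \<Rightarrow> bool" where
  "is_group_inverse a b \<longleftrightarrow> a * b * a = a \<and> b * a * b = b \<and> a * b = b * a"

definition group_invertible :: "'a::ring_1 \<Rightarrow> bool" where
  "group_invertible a \<longleftrightarrow> (\<exists>b. is_group_inverse a b)"

definition group_inv :: "'a::ring_1 \<Rightarrow> 'a" where
  "group_inv a = (THE b. is_group_inverse a b)"

definition projection :: "('a::ring_1 \<Rightarrow> 'a) \<Rightarrow> 'a \<Rightarrow> bool" where
  "projection st e \<longleftrightarrow> e * e = e \<and> e = st e"

definition SEP :: "('a::ring_1 \<Rightarrow> 'a) \<Rightarrow> 'a \<Rightarrow> bool" where
  "SEP st a \<longleftrightarrow> group_invertible a \<and> MP_invertible st a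
      \<and> st a = MP_inv st a \<and> MP_inv st a = group_inv a"

definition chi :: "('a::ring_1 \<Rightarrow> 'a) \<Rightarrow> 'a \<Rightarrow> 'a set" where
  "chi st a = {a, group_inv a, MP_inv st a, st a, st (MP_inv st a), st (group_inv a)}"

end

theory Submission
  imports Defs
begin

lemma inv_facts:
  assumes "involution st"
  shows "st (st x) = x" "st (x * y) = st y * st x"
  using assms by (auto simp: involution_def)

lemma MP_unique:
  assumes inv: "involution st" and B: "is_MP_inverse st a b" and C: "is_MP_inverse st a c"
  shows "b = c"
proof -
  note mul = inv_facts(2)[OF inv]
  from B have b1: "a*b*a = a" and b2: "b*a*b = b" and b3: "st (a*b) = a*b" and b4: "st (b*a) = b*a"
    by (auto simp: is_MP_inverse_def)
  from C have c1: "a*c*a = a" and c2: "c*a*c = c" and c3: "st (a*c) = a*c" and c4: "st (c*a) = c*a"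
    by (auto simp: is_MP_inverse_def)
  have ab: "a*b = a*c"
  proof -
    have "a*b = st (a*b)" using b3 by simp
    also have "\<dots> = st ((a*c)*(a*b))" using c1 by (simp add: mult.assoc[symmetric])
    also have "\<dots> = (a*b)*(a*c)" using mul b3 c3 by simp
    also have "\<dots> = a*c" using b1 by (simp add: mult.assoc[symmetric])
    finally show ?thesis .
  qed
  have ba: "b*a = c*a"
  proof -
    have "b*a = st (b*a)" using b4 by simp
    also have "\<dots> = st ((b*a)*(c*a))" by (simp add: mult.assoc c1[simplified mult.assoc])
    also have "\<dots> = (c*a)*(b*a)" using mul b4 c4 by simp
    also have "\<dots> = c*a" using b1 by (simp add: mult.assoc)
    finally show ?thesis .
  qed
  have "b = b*(a*b)" using b2 by (simp add: mult.assoc)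
  also have "\<dots> = (b*a)*c" using ab by (simp add: mult.assoc)
  also have "\<dots> = c" using ba c2 by simp
  finally show ?thesis .
qed

lemma MP_inv_eq:
  assumes "involution st" "is_MP_inverse st a b"
  shows "MP_inv st a = b"
  unfolding MP_inv_def using assms MP_unique by blast

lemma group_unique:
  assumes B: "is_group_inverse a b" and C: "is_group_inverse a c"
  shows "b = c"
proof -
  from B have b1: "a*b*a = a" and b2: "b*a*b = b" and b3: "a*b = b*a"
    by (auto simp: is_group_inverse_def)
  from C have c1: "a*c*a = a" and c2: "c*a*c = c" and c3: "a*c = c*a"
    by (auto simp: is_group_inverse_def)
  have ba: "b*a = c*a"
  proof -
    have "b*a = a*b" using b3 by simp
    also have "\<dots> = (a*c)*(a*b)" using c1 by (simp add: mult.assoc[symmetric])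
    also have "\<dots> = c*(a*(a*b))" using c3 by (simp add: mult.assoc)
    also have "\<dots> = c*(a*(b*a))" using b3 by simp
    also have "\<dots> = c*(a*b*a)" by (simp only: mult.assoc)
    also have "\<dots> = c*a" using b1 by simp
    finally show ?thesis .
  qed
  have "b = b*(a*b)" using b2 by (simp add: mult.assoc)
  also have "\<dots> = b*(a*c)" using ba b3 c3 by simp
  also have "\<dots> = (b*a)*c" by (simp only: mult.assoc)
  also have "\<dots> = (c*a)*c" by (simp only: ba)
  also have "\<dots> = c" using c2 by simp
  finally show ?thesis .
qed

lemma group_inv_eq:
  assumes "is_group_inverse a b"
  shows "group_inv a = b"
  unfolding group_inv_def using assms group_unique by blast

lemma MP_st:
  assumes inv: "involution st" and B: "is_MP_inverse st a b"
  shows "is_MP_inverse st (st a) (st b)"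
proof -
  note mul = inv_facts(2)[OF inv] and ii = inv_facts(1)[OF inv]
  from B have b1: "a*b*a = a" and b2: "b*a*b = b" and b3: "st (a*b) = a*b" and b4: "st (b*a) = b*a"
    by (auto simp: is_MP_inverse_def)
  have "st a * st b * st a = st (a*b*a)" by (simp add: mul mult.assoc)
  moreover have "st b * st a * st b = st (b*a*b)" by (simp add: mul mult.assoc)
  moreover have "st a * st b = b * a" using b4 mul by simp
  moreover have "st b * st a = a * b" using b3 mul by simp
  ultimately show ?thesis using b1 b2 b3 b4 ii mul unfolding is_MP_inverse_def by simp
qed

lemma wf: "(x::'a::ring_1)*y = z \<Longrightarrow> x*(y*w) = z*w"
  by (simp add: mult.assoc[symmetric])

theorem corollary2p4:
  fixes st :: "'a::ring_1 \<Rightarrow> 'a" and a :: 'a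
  assumes "involution st"
    and "group_invertible a" and "MP_invertible st a"
  shows "SEP st a \<longleftrightarrow>
    (\<exists>x\<in>chi st a. projection st (a * st a * MP_inv st a * x * MP_inv st x * a))"
proof -
  note ii = inv_facts(1)[OF assms(1)] and mul = inv_facts(2)[OF assms(1)]
  obtain b where B: "is_MP_inverse st a b" using assms(3) MP_invertible_def by blast
  obtain g where G: "is_group_inverse a g" using assms(2) group_invertible_def by blast
  have Bi: "MP_inv st a = b" by (rule MP_inv_eq[OF assms(1) B])
  have Gi: "group_inv a = g" by (rule group_inv_eq[OF G])
  from B have b1: "a*b*a = a" and b2: "b*a*b = b" and b3: "st (a*b) = a*b" and b4: "st (b*a) = b*a"
    by (auto simp: is_MP_inverse_def)
  from G have g1: "a*g*a = a" and g2: "g*a*g = g" and g3: "a*g = g*a"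
    by (auto simp: is_group_inverse_def)
  have b1': "a*(b*a) = a" "a*(b*(a*w)) = a*w" for w using b1 by (simp_all add: mult.assoc[symmetric])
  have b2': "b*(a*b) = b" "b*(a*(b*w)) = b*w" for w using b2 by (simp_all add: mult.assoc[symmetric])
  have f1: "b*(a*(st a*w)) = st a*w" for w
  proof -
    have "st a = st (a*(b*a))" using b1' by simp
    also have "\<dots> = b*a*st a" using mul b4 by simp
    finally have h: "st a = b*(a*st a)" by (simp add: mult.assoc)
    have h2: "st a * w = b*(a*(st a*w))" using arg_cong[OF h, of "\<lambda>z. z*w"] by (simp only: mult.assoc)
    show ?thesis by (rule sym[OF h2])
  qed
  have f2: "st a*(a*b) = st a"
  proof -
    have "st a = st ((a*b)*a)" using b1 by simp
    also have "\<dots> = st a*(a*b)" using mul b3 by simp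
    finally show ?thesis by simp
  qed
  have sbsa: "st b*st a = a*b" using mul[of a b] b3 by simp
  have f3w: "b*(st b*(st a*w)) = b*w" for w using wf[OF sbsa] b2' by (simp add: mult.assoc)
  have sasb: "st a*st b = b*a" using mul[of b a] b4 by simp
  have f4w: "st a*(st b*(b*w)) = b*w" for w using wf[OF sasb] b2' by (simp add: mult.assoc)
  have f6: "g*(a*(a*w)) = a*w" for w
  proof -
    have "g*(a*a) = (g*a)*a" by (simp only: mult.assoc)
    also have "\<dots> = (a*g)*a" by (simp only: g3)
    also have "\<dots> = a" by (rule g1)
    finally have h: "g*(a*a) = a" .
    show ?thesis using wf[OF h] by (simp add: mult.assoc)
  qed
  have aag: "a*(a*g) = a"
  proof -
    have "a*(a*g) = a*(g*a)" by (simp only: g3)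
    also have "\<dots> = (a*g)*a" by (simp only: mult.assoc)
    also have "\<dots> = a" by (rule g1)
    finally show ?thesis .
  qed
  have f5: "st a = st g*(st a*st a)"
  proof -
    from aag have "st (a*(a*g)) = st a" by simp
    thus ?thesis using mul by (simp add: mult.assoc)
  qed
  have f5w: "st g*(st a*(st a*w)) = st a*w" for w using wf[OF f5[symmetric]] by (simp add: mult.assoc)
  have f2w: "st a*(a*(b*w)) = st a*w" for w using wf[OF f2] by (simp add: mult.assoc)
  have K1: "b*u = b*v" if "st a*u = st a*v" for u v
  proof -
    have "b*(st b*(st a*u)) = b*(st b*(st a*v))" using that by simp
    thus ?thesis using f3w by simp
  qed
  have K2: "st a*u = st a*v" if "b*u = b*v" for u v
  proof -
    have "st a*(a*(b*u)) = st a*(a*(b*v))" using that by simp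
    thus ?thesis using f2w by simp
  qed
  have K3: "b*u = b*v" if "b*(b*u) = b*(b*v)" for u v
  proof -
    have h: "st a*(b*u) = st a*(b*v)" by (rule K2[OF that])
    have "st a*(st a*(st b*(b*u))) = st a*(st a*(st b*(b*v)))" using h f4w by simp
    hence "st g*(st a*(st a*(st b*(b*u)))) = st g*(st a*(st a*(st b*(b*v))))" by simp
    hence "st a*(st b*(b*u)) = st a*(st b*(b*v))" by (simp only: f5w)
    thus ?thesis by (simp only: f4w)
  qed
  have C1: "a = a*(a*b)" if "a*(st a*(b*a)) = a*(st a*(b*(a*(a*b))))"
  proof -
    have "b*(a*(st a*(b*a))) = b*(a*(st a*(b*(a*(a*b)))))" using that by simp
    hence "st a*(b*a) = st a*(b*(a*(a*b)))" using f1 by simp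
    hence "b*(b*a) = b*(b*(a*(a*b)))" by (rule K1)
    hence "b*a = b*(a*(a*b))" by (rule K3)
    hence "a*(b*a) = a*(b*(a*(a*b)))" by simp
    thus ?thesis using b1' by simp
  qed
  have C2: "a = a*(a*b)" if "a*(st a*(b*(b*(a*a)))) = a*(st a*(b*(b*(a*(a*(a*b))))))"
  proof -
    have "b*(a*(st a*(b*(b*(a*a))))) = b*(a*(st a*(b*(b*(a*(a*(a*b)))))))" using that by simp
    hence "st a*(b*(b*(a*a))) = st a*(b*(b*(a*(a*(a*b)))))" using f1 by simp
    hence "b*(b*(b*(a*a))) = b*(b*(b*(a*(a*(a*b)))))" by (rule K1)
    hence "b*(b*(a*a)) = b*(b*(a*(a*(a*b))))" by (rule K3)
    hence "b*(a*a) = b*(a*(a*(a*b)))" by (rule K3)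
    hence "a*(b*(a*a)) = a*(b*(a*(a*(a*b))))" by simp
    hence "a*a = a*(a*(a*b))" using b1' by simp
    hence "g*(a*a) = g*(a*(a*(a*b)))" by simp
    thus ?thesis using f6[of 1] f6[of "a*b"] by simp
  qed
  have EP: "a*b = b*a \<and> g = b" if "a = a*(a*b)"
  proof -
    from that have "g*a = g*(a*(a*b))" by (rule arg_cong)
    hence ga: "g*a = a*b" using f6[of b] by simp
    have s: "st (g*a) = g*a" using ga b3 by simp
    have e1: "(b*a)*(g*a) = b*a" by (simp add: mult.assoc g1[simplified mult.assoc])
    have e2: "(g*a)*(b*a) = g*a" by (simp add: mult.assoc b1')
    have "g*a = st ((g*a)*(b*a))" using e2 s by simp
    also have "\<dots> = b*a" using mul s b4 e1 by simp
    finally have ab: "a*b = b*a" using ga by simp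
    have "is_group_inverse a b" using b1 b2 ab by (simp add: is_group_inverse_def)
    hence "g = b" using G group_unique by blast
    thus ?thesis using ab by simp
  qed
  define y where "y = b*(a*(a*(a*b)))"
  have gb: "g*(b*a) = g" and abg: "a*(b*g) = g"
  proof -
    have "g*(g*a) = g*(a*g)" by (simp only: g3)
    also have "\<dots> = g*a*g" by (simp only: mult.assoc)
    finally have gga: "g*(g*a) = g" using g2 by simp
    have agg: "(a*g)*g = g" using g2 g3 by simp
    have "g*(b*a) = (g*(g*a))*(b*a)" using gga by simp
    also have "\<dots> = g*(g*(a*(b*a)))" by (simp only: mult.assoc)
    also have "\<dots> = g" using gga b1' by simp
    finally show "g*(b*a) = g" .
    have "a*(b*g) = a*(b*((a*g)*g))" using agg by simp
    also have "\<dots> = (a*(b*a))*(g*g)" by (simp only: mult.assoc)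
    also have "\<dots> = g" using agg b1' by (simp add: mult.assoc)
    finally show "a*(b*g) = g" .
  qed
  have gy: "g*y = a*b"
  proof -
    have "g*y = (g*(b*a))*(a*(a*b))" unfolding y_def by (simp add: mult.assoc)
    also have "\<dots> = (g*(a*a))*b" using gb by (simp add: mult.assoc)
    also have "\<dots> = a*b" using f6[of 1] by simp
    finally show ?thesis .
  qed
  have yg: "y*g = b*a"
  proof -
    have "y*g = b*(a*(a*(a*(b*g))))" unfolding y_def by (simp add: mult.assoc)
    also have "\<dots> = b*(a*(a*g))" using abg by simp
    also have "\<dots> = b*a" using aag by simp
    finally show ?thesis .
  qed
  have Yg: "is_MP_inverse st g y"
  proof -
    have "g*y*g = g" using gy abg by (simp add: mult.assoc)
    moreover have "y*g*y = y"
    proof -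
      have "y*g*y = b*(a*(b*(a*(a*(a*b)))))" using yg unfolding y_def by (simp add: mult.assoc)
      also have "\<dots> = y" unfolding y_def using b2' by simp
      finally show ?thesis .
    qed
    ultimately show ?thesis using gy yg b3 b4 unfolding is_MP_inverse_def by simp
  qed
  have Bb: "is_MP_inverse st b a" using B unfolding is_MP_inverse_def by auto
  have XX: "x * MP_inv st x = a*b \<or> x * MP_inv st x = b*a" if "x \<in> chi st a" for x
  proof -
    from that have "x \<in> {a, g, b, st a, st b, st g}" unfolding chi_def Bi Gi by simp
    then consider "x = a" | "x = g" | "x = b" | "x = st a" | "x = st b" | "x = st g" by blast
    then show ?thesis
    proof cases
      case 1 then show ?thesis using Bi by simp
    next
      case 2 then show ?thesis using MP_inv_eq[OF assms(1) Yg] gy by simp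
    next
      case 3 then show ?thesis using MP_inv_eq[OF assms(1) Bb] by simp
    next
      case 4 then show ?thesis using MP_inv_eq[OF assms(1) MP_st[OF assms(1) B]] mul b4 by simp
    next
      case 5 then show ?thesis using MP_inv_eq[OF assms(1) MP_st[OF assms(1) Bb]] mul b3 by simp
    next
      case 6 then show ?thesis using MP_inv_eq[OF assms(1) MP_st[OF assms(1) Yg]] mul[of y g, symmetric] yg b4 by simp
    qed
  qed
  show ?thesis
  proof
    assume S: "SEP st a"
    hence sa: "st a = b" and bg: "b = g" using Bi Gi by (auto simp: SEP_def)
    have ab: "a*b = b*a" using g3 bg by simp
    have ach: "a \<in> chi st a" by (simp add: chi_def)
    have "a * st a * MP_inv st a * a * MP_inv st a * a = a*b"
    proof -
      have "a * st a * MP_inv st a * a * MP_inv st a * a = a*(b*(b*(a*(b*a))))"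
        using sa Bi by (simp add: mult.assoc)
      also have "\<dots> = a*(b*(b*a))" using b2' by simp
      also have "\<dots> = a*(b*(a*b))" using ab by simp
      also have "\<dots> = a*b" using b2' by simp
      finally show ?thesis .
    qed
    moreover have "projection st (a*b)" using b1 b3 unfolding projection_def
      by (simp add: mult.assoc[symmetric])
    ultimately have "projection st (a * st a * MP_inv st a * a * MP_inv st a * a)" by simp
    thus "\<exists>x\<in>chi st a. projection st (a * st a * MP_inv st a * x * MP_inv st x * a)"
      using ach Bi by blast
  next
    assume "\<exists>x\<in>chi st a. projection st (a * st a * MP_inv st a * x * MP_inv st x * a)"
    then obtain x where xc: "x \<in> chi st a"
      and P: "projection st (a * st a * MP_inv st a * x * MP_inv st x * a)" by blast
    define p where "p = a * st a * MP_inv st a * x * MP_inv st x * a"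
    have pp: "p*p = p" and ps: "st p = p" using P unfolding p_def projection_def by auto
    have pab: "p = (a*b)*p" unfolding p_def using b1'(2) by (simp add: mult.assoc)
    have pr: "p = p*(a*b)"
    proof -
      have "p = st ((a*b)*p)" using pab ps by simp
      also have "\<dots> = p*(a*b)" using mul ps b3 by simp
      finally show ?thesis .
    qed
    have pa: "p = a*st a" and ep: "a*b = b*a \<and> g = b"
    proof -
      from XX[OF xc] have "(p = a*(st a*(b*a)) \<and> a*b = b*a \<and> g = b)
          \<or> (p = a*(st a*(b*(b*(a*a)))) \<and> a*b = b*a \<and> g = b)"
      proof
        assume h: "x * MP_inv st x = a*b"
        have pe: "p = a*(st a*(b*a))" unfolding p_def using h Bi b2'
          by (simp add: mult.assoc)
        hence "a*(st a*(b*a)) = a*(st a*(b*a))*(a*b)" using pr by simp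
        hence "a = a*(a*b)" using C1 by (simp add: mult.assoc)
        thus ?thesis using EP pe by blast
      next
        assume h: "x * MP_inv st x = b*a"
        have pe: "p = a*(st a*(b*(b*(a*a))))" unfolding p_def using h Bi
          by (simp add: mult.assoc)
        hence "a*(st a*(b*(b*(a*a)))) = a*(st a*(b*(b*(a*a))))*(a*b)" using pr by simp
        hence "a = a*(a*b)" using C2 by (simp add: mult.assoc)
        thus ?thesis using EP pe by blast
      qed
      moreover have "a*(st a*(b*a)) = a*st a" if "a*b = b*a" using f2 that by simp
      moreover have "a*(st a*(b*(b*(a*a)))) = a*st a" if "a*b = b*a"
      proof -
        have "b*(b*(a*a)) = b*((b*a)*a)" by (simp add: mult.assoc)
        also have "\<dots> = b*a" using that b2' by (simp add: mult.assoc[symmetric])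
        finally show ?thesis using f2 that by simp
      qed
      ultimately show "p = a*st a" "a*b = b*a \<and> g = b" by auto
    qed
    have "a*st a*(a*st a) = a*st a" using pp pa by simp
    hence "b*(a*(st a*(a*st a))) = b*(a*st a)" by (simp add: mult.assoc)
    hence q: "st a*(a*st a) = st a" using f1[of "a*st a"] f1[of 1] by simp
    have "is_MP_inverse st a (st a)"
    proof -
      have "st (st a*(a*st a)) = a" using q ii by simp
      hence "a*st a*a = a" using mul ii by (simp add: mult.assoc)
      thus ?thesis using q ii mul unfolding is_MP_inverse_def by (simp add: mult.assoc)
    qed
    hence "b = st a" using MP_unique[OF assms(1) B] by blast
    thus "SEP st a" using assms Bi Gi ep unfolding SEP_def by simp
  qed
qed

end
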